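(* For all integers $n\ge1$ and $q\ge0$, $(q+1)^n-(n+1)q^n \le A(n,q)\le (q+1)^n$.
   Context: $A(n,q)$ is the Eulerian number, the number of permutations of $\{1,\dots,n\}$ with exactly $q$ ascents, with $A(n,q)=0$ if $q\ge n$. *)

theory Defs
  imports Main "HOL-Combinatorics.Multiset_Permutations"
begin

definition ascents :: "nat list \<Rightarrow> nat" where
  "ascents xs = card {i. Suc i < length xs \<and> xs ! i < xs ! Suc i}"

definition eulerian :: "nat \<Rightarrow> nat \<Rightarrow> nat" where
  "eulerian n q = card {xs \<in> permutations_of_set {1..n}. ascents xs = q}"

end

theory Submission
  imports Defs
begin

fun asc :: "nat list \<Rightarrow> nat" where
  "asc (x # y # zs) = (if x < y then 1 else 0) + asc (y # zs)"
| "asc _ = 0"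

lemma ascents_asc: "ascents xs = asc xs"
proof (induction xs rule: asc.induct)
  case (1 x y zs)
  let ?B = "{i. Suc i < length (y#zs) \<and> (y#zs)!i < (y#zs)!Suc i}"
  have eq: "{i. Suc i < length (x#y#zs) \<and> (x#y#zs)!i < (x#y#zs)!Suc i}
     = (if x<y then {0} else {}) \<union> Suc ` ?B" (is "?L = ?R")
  proof
    show "?L \<subseteq> ?R"
    proof
      fix i assume "i \<in> ?L" then show "i \<in> ?R" by (cases i) auto
    qed
    show "?R \<subseteq> ?L" by (auto split: if_splits)
  qed
  have fin: "finite ?B" by (rule finite_subset[of _ "{..<length (y#zs)}"]) auto
  have "card ((if x<y then {0} else {}) \<union> Suc ` ?B) = (if x<y then 1 else 0) + card ?B"
    using fin by (subst card_Un_disjoint) (auto simp: card_image)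
  then show ?case using 1 eq by (simp add: ascents_def)
qed (auto simp: ascents_def)

lemma asc_app_Cons: "asc (xs @ y # zs) = asc (xs @ [y]) + asc (y # zs)"
proof (induction xs)
  case (Cons a xs) then show ?case by (cases xs) auto
qed simp

lemma asc_snoc: "asc (xs @ [m]) = asc xs + (if xs \<noteq> [] \<and> last xs < m then 1 else 0)"
proof (induction xs)
  case (Cons a xs) then show ?case by (cases xs) auto
qed simp

lemma asc_Cons_big: "\<forall>z\<in>set zs. z < m \<Longrightarrow> asc (m # zs) = asc zs"
  by (cases zs) auto

lemma asc_append: "asc (ys @ zs) = asc ys + asc zs + (if ys \<noteq> [] \<and> zs \<noteq> [] \<and> last ys < hd zs then 1 else 0)"
proof (cases zs)
  case (Cons z zs')
  then show ?thesis using asc_app_Cons[of ys z zs'] asc_snoc[of ys z] by simp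
qed simp

lemma asc_insert_big:
  assumes "\<forall>z\<in>set ys \<union> set zs. z < m"
  shows "asc (ys @ m # zs) = asc (ys @ zs) + (if ys \<noteq> [] \<and> \<not> (zs \<noteq> [] \<and> last ys < hd zs) then 1 else 0)"
proof -
  have "ys \<noteq> [] \<Longrightarrow> last ys < m" using assms by auto
  then show ?thesis
    using asc_app_Cons[of ys m zs] asc_snoc[of ys m] asc_Cons_big[of zs m] asc_append[of ys zs] assms
    by auto
qed

lemma binom_abs: "Suc N * (m choose Suc N) = (m - N) * (m choose N)"
  by (metis binomial_absorption binomial_absorb_comp)

lemma binom_step:
  "Suc k * (x + d + 1 choose Suc (k + d)) + d * (x + d choose Suc (k + d)) = Suc x * (x + d choose (k + d))"
proof (cases "k \<le> x")
  case True
  have "Suc k * (x + d + 1 choose Suc (k + d)) + d * (x + d choose Suc (k + d))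
     = Suc (k+d) * (x + d choose Suc (k + d)) + Suc k * (x + d choose (k+d))"
    by (simp add: algebra_simps)
  also have "\<dots> = (x - k) * (x + d choose (k+d)) + Suc k * (x + d choose (k+d))"
    by (subst binom_abs) simp
  also have "\<dots> = Suc x * (x + d choose (k + d))" using True by (simp add: algebra_simps)
  finally show ?thesis .
next
  case False
  then have "x + d < k + d" "x + d + 1 < Suc (k + d)" by auto
  then show ?thesis by (simp add: binomial_eq_0)
qed

lemma binom_le: "n \<le> m \<Longrightarrow> (Suc m choose n) \<le> Suc n * (m choose n)"
proof (cases n)
  case (Suc r)
  assume "n \<le> m"
  have "(m choose r) \<le> (m - r) * (m choose r)" using Suc \<open>n \<le> m\<close> by simp
  also have "\<dots> = Suc r * (m choose Suc r)" by (rule binom_abs[symmetric])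
  finally show ?thesis using Suc by simp
qed simp

definition ins :: "nat \<Rightarrow> nat list \<Rightarrow> nat \<Rightarrow> nat list" where
  "ins m p i = take i p @ m # drop i p"

definition dd :: "nat list \<Rightarrow> nat \<Rightarrow> bool" where
  "dd p i = (0 < i \<and> \<not> (i < length p \<and> p!(i-1) < p!i))"

lemma asc_ins:
  assumes "\<forall>z\<in>set p. z < m" "i \<le> length p"
  shows "asc (ins m p i) = asc p + (if dd p i then 1 else 0)"
proof -
  have s: "\<forall>z\<in>set (take i p) \<union> set (drop i p). z < m"
    using assms(1) by (auto dest: in_set_takeD in_set_dropD)
  have e1: "(take i p \<noteq> []) = (0 < i)" using assms(2) by auto
  have e2: "(drop i p \<noteq> []) = (i < length p)" by auto
  have e3: "0 < i \<Longrightarrow> last (take i p) = p!(i-1)"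
  proof -
    assume "0 < i"
    then have "take i p \<noteq> []" using assms(2) by auto
    then show ?thesis using \<open>0 < i\<close> assms(2) by (simp add: last_conv_nth)
  qed
  have e4: "i < length p \<Longrightarrow> hd (drop i p) = p!i"
    by (simp add: hd_drop_conv_nth)
  show ?thesis
    using asc_insert_big[OF s] e1 e2 e3 e4 unfolding ins_def dd_def
    by (auto simp del: take_eq_Nil drop_eq_Nil)
qed

lemma set_take_drop_un: "set (take i p) \<union> set (drop i p) = set p"
  by (simp only: set_append[symmetric] append_take_drop_id)
lemma set_ins: "set (ins m p i) = insert m (set p)"
  unfolding ins_def using set_take_drop_un[of i p] by auto
lemma distinct_ins: "distinct (ins m p i) = (distinct p \<and> m \<notin> set p)"
proof -
  have a: "distinct (take i p @ m # drop i p) = (distinct (take i p) \<and> distinct (drop i p) \<and> m \<notin> set (take i p) \<and> m \<notin> set (drop i p) \<and> set (take i p) \<inter> set (drop i p) = {})"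
    by (auto simp: distinct_append)
  have b: "distinct p = (distinct (take i p) \<and> distinct (drop i p) \<and> set (take i p) \<inter> set (drop i p) = {})"
    by (simp only: distinct_append[symmetric] append_take_drop_id)
  show ?thesis unfolding ins_def a b using set_take_drop_un[of i p] by blast
qed
abbreviation P :: "nat \<Rightarrow> nat list set" where
  "P n \<equiv> permutations_of_set {1..n}"

lemma P_length: "p \<in> P n \<Longrightarrow> length p = n"
  using distinct_card[of p] permutations_of_setD[of p "{1..n}"] by simp

lemma bij_ins: "bij_betw (\<lambda>(p,i). ins (Suc n) p i) (Sigma (P n) (\<lambda>_. {0..n})) (P (Suc n))"
  unfolding bij_betw_def
proof
  show "inj_on (\<lambda>(p,i). ins (Suc n) p i) (Sigma (P n) (\<lambda>_. {0..n}))"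
  proof (rule inj_onI, clarify)
    fix p i p' i'
    assume a: "p \<in> P n" "i \<in> {0..n}" "p' \<in> P n" "i' \<in> {0..n}"
      and eq: "ins (Suc n) p i = ins (Suc n) p' i'"
    have n1: "Suc n \<notin> set (take i p)" "Suc n \<notin> set (take i' p')" "Suc n \<notin> set (drop i p)"
      using a by (auto dest!: in_set_takeD in_set_dropD permutations_of_setD(1))
    have td: "take i p = take i' p'" "drop i p = drop i' p'"
      using eq n1 append_Cons_eq_iff[of "Suc n" "take i p" "drop i p" "take i' p'" "drop i' p'"]
      unfolding ins_def by simp_all
    have l: "length p = n" "length p' = n" using a P_length by auto
    have "i = length (take i p)" using a l by simp
    also have "\<dots> = length (take i' p')" using td by simp
    also have "\<dots> = i'" using a l by simp
    finally have ii: "i = i'" .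
    have "p = take i p @ drop i p" by simp
    also have "\<dots> = p'" using td by simp
    finally show "p = p' \<and> i = i'" using ii by simp
  qed
  show "(\<lambda>(p,i). ins (Suc n) p i) ` (Sigma (P n) (\<lambda>_. {0..n})) = P (Suc n)"
  proof
    show "(\<lambda>(p,i). ins (Suc n) p i) ` (Sigma (P n) (\<lambda>_. {0..n})) \<subseteq> P (Suc n)"
    proof clarify
      fix p i assume a: "p \<in> P n" "i \<in> {0..n}"
      have "set p = {1..n}" "distinct p" using permutations_of_setD[OF a(1)] by simp_all
      moreover have "set (ins (Suc n) p i) = insert (Suc n) (set p)"
        using set_ins by blast
      moreover have "distinct (ins (Suc n) p i) = (distinct p \<and> Suc n \<notin> set p)"
        using distinct_ins by blast
      ultimately show "ins (Suc n) p i \<in> P (Suc n)"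
        by (intro permutations_of_setI) auto
    qed
    show "P (Suc n) \<subseteq> (\<lambda>(p,i). ins (Suc n) p i) ` (Sigma (P n) (\<lambda>_. {0..n}))"
    proof
      fix xs assume xs: "xs \<in> P (Suc n)"
      then have sx: "set xs = {1..Suc n}" and dx: "distinct xs" using permutations_of_setD[OF xs] by simp_all
      then have "Suc n \<in> set xs" by simp
      then obtain ys zs where xsd: "xs = ys @ Suc n # zs" by (meson split_list)
      let ?p = "ys @ zs"
      have "Suc n \<notin> set ?p" "distinct ?p" using dx unfolding xsd by simp_all
      moreover have "set xs = insert (Suc n) (set ?p)" unfolding xsd by simp
      ultimately have "set ?p = set xs - {Suc n}" by blast
      also have "\<dots> = {1..n}" unfolding sx by (simp add: atLeastAtMostSuc_conv)
      finally have "set ?p = {1..n}" .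
      then have pP: "?p \<in> P n" using \<open>distinct ?p\<close> by auto
      then have "length ys \<le> n" using P_length[OF pP] by simp
      moreover have "xs = ins (Suc n) ?p (length ys)" unfolding ins_def xsd by simp
      ultimately show "xs \<in> (\<lambda>(p,i). ins (Suc n) p i) ` (Sigma (P n) (\<lambda>_. {0..n}))"
        using pP by (intro image_eqI[where x="(?p, length ys)"]) auto
    qed
  qed
qed

lemma bij_card_filter:
  assumes "bij_betw f A B"
  shows "card {y\<in>B. Q y} = card {x\<in>A. Q (f x)}"
proof -
  have "inj_on f {x\<in>A. Q (f x)}" by (rule inj_on_subset[OF bij_betw_imp_inj_on[OF assms]]) blast
  moreover have "f ` {x\<in>A. Q (f x)} = {y\<in>B. Q y}"
    using bij_betw_imp_surj_on[OF assms] by blast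
  ultimately show ?thesis by (metis card_image)
qed

lemma ascents_le: "ascents xs \<le> length xs"
proof -
  have "ascents xs \<le> card {..<length xs}"
    unfolding ascents_def by (rule card_mono) auto
  then show ?thesis by simp
qed

lemma count_not_dd:
  assumes "length p = n"
  shows "card {i\<in>{0..n}. \<not> dd p i} = Suc (ascents p)"
proof -
  let ?B = "{j. Suc j < length p \<and> p!j < p!Suc j}"
  have eq: "{i\<in>{0..n}. \<not> dd p i} = insert 0 (Suc ` ?B)" (is "?L = ?R")
  proof
    show "?L \<subseteq> ?R"
    proof
      fix i assume "i \<in> ?L" then show "i \<in> ?R" using assms by (cases i) (auto simp: dd_def)
    qed
    show "?R \<subseteq> ?L" using assms by (auto simp: dd_def)
  qed
  have fin: "finite ?B" by (rule finite_subset[of _ "{..<length p}"]) auto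
  show ?thesis unfolding eq using fin by (simp add: card_image ascents_def)
qed

lemma count_dd:
  assumes "length p = n"
  shows "card {i\<in>{0..n}. dd p i} = n - ascents p"
proof -
  have e: "{i\<in>{0..n}. dd p i} = {0..n} - {i\<in>{0..n}. \<not> dd p i}" by auto
  have "card ({0..n} - {i\<in>{0..n}. \<not> dd p i}) = card {0..n} - card {i\<in>{0..n}. \<not> dd p i}"
    by (rule card_Diff_subset) auto
  then have "card {i\<in>{0..n}. dd p i} = card {0..n} - card {i\<in>{0..n}. \<not> dd p i}"
    using e by simp
  then show ?thesis using count_not_dd[OF assms] by simp
qed

lemma count_pos:
  assumes "p \<in> P n"
  shows "card {i\<in>{0..n}. asc p + (if dd p i then 1 else 0) = k}
     = (if ascents p = k then Suc k else 0) + (if Suc (ascents p) = k then Suc n - k else 0)"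
proof -
  have l: "length p = n" using P_length[OF assms] .
  have a: "asc p = ascents p" by (simp add: ascents_asc)
  consider "ascents p = k" | "Suc (ascents p) = k" | "ascents p \<noteq> k \<and> Suc (ascents p) \<noteq> k" by blast
  then show ?thesis
  proof cases
    case 1
    then have "{i\<in>{0..n}. asc p + (if dd p i then 1 else 0) = k} = {i\<in>{0..n}. \<not> dd p i}"
      using a by auto
    then show ?thesis using count_not_dd[OF l] 1 by simp
  next
    case 2
    then have "{i\<in>{0..n}. asc p + (if dd p i then 1 else 0) = k} = {i\<in>{0..n}. dd p i}"
      using a by auto
    then show ?thesis using count_dd[OF l] 2 by simp
  next
    case 3
    then have "{i\<in>{0..n}. asc p + (if dd p i then 1 else 0) = k} = {}"
      using a by auto
    then show ?thesis using 3 by simp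
  qed
qed

lemma sum_if_const: "finite A \<Longrightarrow> (\<Sum>x\<in>A. if Q x then (c::nat) else 0) = c * card {x\<in>A. Q x}"
  by (simp add: sum.inter_filter[symmetric])

lemma eulerian_rec:
  "eulerian (Suc n) k = Suc k * eulerian n k + (Suc n - k) * card {p\<in>P n. Suc (ascents p) = k}"
proof -
  have fin: "finite (P n)" by (simp add: finite_permutations_of_set)
  have "eulerian (Suc n) k = card {x\<in>Sigma (P n) (\<lambda>_. {0..n}). ascents ((\<lambda>(p,i). ins (Suc n) p i) x) = k}"
    unfolding eulerian_def by (rule bij_card_filter[OF bij_ins])
  also have "{x\<in>Sigma (P n) (\<lambda>_. {0..n}). ascents ((\<lambda>(p,i). ins (Suc n) p i) x) = k}
     = Sigma (P n) (\<lambda>p. {i\<in>{0..n}. asc p + (if dd p i then 1 else 0) = k})"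
  proof -
    have "\<And>p i. p \<in> P n \<Longrightarrow> i \<in> {0..n} \<Longrightarrow> ascents (ins (Suc n) p i) = asc p + (if dd p i then 1 else 0)"
    proof -
      fix p i assume "p \<in> P n" "i \<in> {0..n}"
      moreover have "\<forall>z\<in>set p. z < Suc n" using \<open>p \<in> P n\<close> permutations_of_setD by fastforce
      ultimately show "ascents (ins (Suc n) p i) = asc p + (if dd p i then 1 else 0)"
        using asc_ins[of p "Suc n" i] P_length by (simp add: ascents_asc)
    qed
    then show ?thesis by auto
  qed
  also have "card \<dots> = (\<Sum>p\<in>P n. card {i\<in>{0..n}. asc p + (if dd p i then 1 else 0) = k})"
    using fin by (subst card_SigmaI) auto
  also have "\<dots> = (\<Sum>p\<in>P n. (if ascents p = k then Suc k else 0) + (if Suc (ascents p) = k then Suc n - k else 0))"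
    by (rule sum.cong[OF refl], rule count_pos)
  also have "\<dots> = Suc k * eulerian n k + (Suc n - k) * card {p\<in>P n. Suc (ascents p) = k}"
    using fin by (simp add: sum.distrib sum_if_const eulerian_def)
  finally show ?thesis .
qed

lemma eulerian_big: "n < k \<Longrightarrow> eulerian n k = 0"
  unfolding eulerian_def using ascents_le P_length
  by (auto simp: card_eq_0_iff finite_permutations_of_set) (metis leD)

lemma binom_step':
  assumes "k \<le> n"
  shows "Suc k * (x + Suc n - k choose Suc n) + (n - k) * (x + n - k choose Suc n) = Suc x * (x + n - k choose n)"
proof -
  define d where "d = n - k"
  have d: "n = k + d" using assms d_def by simp
  have e: "n - k = d" "x + Suc n - k = x + d + 1" "x + n - k = x + d" using d by auto
  show ?thesis unfolding e using binom_step[of k x d] d by (simp only:)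
qed

lemma B_card: "card {p\<in>P n. Suc (ascents p) = Suc j} = eulerian n j"
  unfolding eulerian_def by simp

lemma worpitzky: "(Suc x) ^ n = (\<Sum>k\<le>n. eulerian n k * (x + n - k choose n))"
proof (induction n)
  case 0
  have "{xs \<in> P 0. ascents xs = 0} = {[]}" by (auto simp: ascents_asc)
  then have "eulerian 0 0 = 1" unfolding eulerian_def by simp
  then show ?case by simp
next
  case (Suc n)
  let ?E = "eulerian n" and ?B = "\<lambda>k. card {p\<in>P n. Suc (ascents p) = k}"
  have "(\<Sum>k\<le>Suc n. eulerian (Suc n) k * (x + Suc n - k choose Suc n))
      = (\<Sum>k\<le>Suc n. Suc k * ?E k * (x + Suc n - k choose Suc n))
        + (\<Sum>k\<le>Suc n. (Suc n - k) * ?B k * (x + Suc n - k choose Suc n))"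
    by (simp add: eulerian_rec sum.distrib algebra_simps)
  also have "(\<Sum>k\<le>Suc n. Suc k * ?E k * (x + Suc n - k choose Suc n))
      = (\<Sum>k\<le>n. Suc k * ?E k * (x + Suc n - k choose Suc n))"
    by (simp add: eulerian_big)
  also have "(\<Sum>k\<le>Suc n. (Suc n - k) * ?B k * (x + Suc n - k choose Suc n))
      = (\<Sum>k\<le>n. (n - k) * ?E k * (x + n - k choose Suc n))"
    by (subst sum.atMost_Suc_shift) (simp add: eulerian_def)
  also have "(\<Sum>k\<le>n. Suc k * ?E k * (x + Suc n - k choose Suc n)) + (\<Sum>k\<le>n. (n - k) * ?E k * (x + n - k choose Suc n))
      = (\<Sum>k\<le>n. ?E k * (Suc k * (x + Suc n - k choose Suc n) + (n - k) * (x + n - k choose Suc n)))"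
    by (simp only: sum.distrib[symmetric] distrib_left ac_simps)
  also have "\<dots> = (\<Sum>k\<le>n. ?E k * (Suc x * (x + n - k choose n)))"
    by (rule sum.cong[OF refl]) (simp only: binom_step' atMost_iff)
  also have "\<dots> = Suc x * (\<Sum>k\<le>n. ?E k * (x + n - k choose n))"
    by (simp add: sum_distrib_left algebra_simps)
  finally show ?case using Suc by simp
qed

lemma upper: "eulerian n q \<le> (Suc q) ^ n"
proof (cases "q \<le> n")
  case True
  have "eulerian n q = eulerian n q * (q + n - q choose n)" by simp
  also have "\<dots> \<le> (\<Sum>k\<le>n. eulerian n k * (q + n - k choose n))"
    using True by (intro member_le_sum) auto
  finally show ?thesis by (simp add: worpitzky)
qed (simp add: eulerian_big)

lemma lower: "(Suc q) ^ n \<le> eulerian n q + Suc n * q ^ n"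
proof -
  define g where "g k = (if q = 0 then 0 else eulerian n k * (q - 1 + n - k choose n))" for k
  have tb: "eulerian n k * (q + n - k choose n) \<le> (if k = q then eulerian n q else 0) + Suc n * g k"
    if "k \<le> n" for k
  proof -
    consider "k = q" | "q < k" | "k < q" by linarith
    then show ?thesis
    proof cases
      case 2
      then have "q + n - k < n" using that by simp
      then show ?thesis by (simp add: binomial_eq_0)
    next
      case 3
      then have "Suc (q - 1 + n - k) = q + n - k" "n \<le> q - 1 + n - k" using that by auto
      then have "(q + n - k choose n) \<le> Suc n * (q - 1 + n - k choose n)"
        using binom_le[of n "q - 1 + n - k"] by metis
      then have "eulerian n k * (q + n - k choose n) \<le> eulerian n k * (Suc n * (q - 1 + n - k choose n))"
        by (rule mult_left_mono) simp
      then show ?thesis using 3 by (simp add: g_def algebra_simps)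
    qed simp
  qed
  have sg: "(\<Sum>k\<le>n. g k) \<le> q ^ n"
  proof (cases "q = 0")
    case False
    then have "Suc (q - 1) = q" by simp
    then show ?thesis using worpitzky[of "q - 1" n] False by (simp add: g_def)
  qed (simp add: g_def)
  have si: "(\<Sum>k\<le>n. (if k = q then eulerian n q else 0)) \<le> eulerian n q"
    by (simp add: sum.delta)
  have "(Suc q) ^ n = (\<Sum>k\<le>n. eulerian n k * (q + n - k choose n))" by (rule worpitzky)
  also have "\<dots> \<le> (\<Sum>k\<le>n. (if k = q then eulerian n q else 0) + Suc n * g k)"
    by (rule sum_mono) (use tb in auto)
  also have "\<dots> = (\<Sum>k\<le>n. (if k = q then eulerian n q else 0)) + Suc n * (\<Sum>k\<le>n. g k)"
    by (simp add: sum.distrib sum_distrib_left)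
  also have "\<dots> \<le> eulerian n q + Suc n * q ^ n"
    using si sg by (intro add_mono mult_left_mono) auto
  finally show ?thesis .
qed

theorem mainTheorem18:
  fixes n q :: nat
  assumes "n \<ge> 1"
  shows "(int q + 1) ^ n - (int n + 1) * int q ^ n \<le> int (eulerian n q)
         \<and> int (eulerian n q) \<le> (int q + 1) ^ n"
proof
  have "int ((Suc q) ^ n) \<le> int (eulerian n q + Suc n * q ^ n)" using lower[of q n] by (simp only: of_nat_le_iff)
  then show "(int q + 1) ^ n - (int n + 1) * int q ^ n \<le> int (eulerian n q)" by (simp add: algebra_simps)
  have "int (eulerian n q) \<le> int ((Suc q) ^ n)" using upper[of n q] by (simp only: of_nat_le_iff)
  then show "int (eulerian n q) \<le> (int q + 1) ^ n" by (simp add: add.commute)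
qed

end
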